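(* Let $\alpha_a$ be a labeled dGL hybrid game, $S$ an inductive Angelic subvalue map for $\alpha_a$, and $\varphi$ a formula compatible with $S$ (i.e. $\models S(\mathsf{end})\rightarrow\varphi$). Then every state satisfying $S(a)$ satisfies $\langle\mathcal{P}(\alpha_a,S)\rangle\varphi$.
   Context: Differential game logic (dGL). Hybrid games are generated by $\alpha,\beta ::= x:=e \mid \alpha;\beta \mid ?Q \mid \{x'=f(x)\,\&\,Q\} \mid \alpha^{*} \mid \alpha\cup\beta \mid x:=* \mid\ !Q \mid \{x'=f(x)\,\&\,Q\}^{d} \mid \alpha^{\times} \mid \alpha\cap\beta \mid x:=\otimes$, with $x$ a real variable (vector for ODEs), $e,f(x)$ polynomial terms, $Q$ a formula. Players Angel and Demon: $x:=e$ deterministic assignment; in $x:=*$ Angel (in $x:=\otimes$ Demon) assigns any real; in $\{x'=f(x)\&Q\}$ Angel (in $\{\cdot\}^d$ Demon) chooses a duration $r\ge 0$ of following the ODE with $Q$ true throughout; $?Q$ makes Angel lose and $!Q$ makes Demon lose if $Q$ is false; in $\alpha\cup\beta$ Angel (in $\alpha\cap\beta$ Demon) chooses the branch; in $\alpha^*$ Angel (in $\alpha^\times$ Demon) decides before each iteration whether to repeat or stop; $\alpha;\beta$ sequential. Formulas: polynomial (in)equalities closed under connectives, real quantifiers, and modalities $\langle\alpha\rangle\varphi$ (Angel can win $\alpha$ reaching $\varphi$) and $[\alpha]\varphi\equiv\neg\langle\alpha\rangle\neg\varphi$, with the standard dGL winning-region semantics ($\langle x:=*\rangle\varphi\leftrightarrow\exists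 x\varphi$, $\langle x:=\otimes\rangle\varphi\leftrightarrow\forall x\varphi$, $\langle ?Q\rangle\varphi\leftrightarrow Q\wedge\varphi$, $\langle !Q\rangle\varphi\leftrightarrow(Q\rightarrow\varphi)$, $\cup$ as disjunction, $\cap$ as conjunction, $\langle\alpha;\beta\rangle\varphi\leftrightarrow\langle\alpha\rangle\langle\beta\rangle\varphi$, Angel ODE existential, Demon ODE universal, $\langle\alpha^*\rangle$ least and $\langle\alpha^\times\rangle$ greatest fixed point). $\models$ denotes validity. Labels: every node of the syntax tree carries a unique label; $\alpha_a$ has root label $a$; $\mathrm{nodes}(\alpha_a)$ is its set of subgame labels; $\mathsf{end}$ is a special extra label. A map $S$ assigns formulas to a label set containing $\mathrm{nodes}(\alpha_a)\cup\{\mathsf{end}\}$; $S\{\mathsf{end}\mapsto Q\}$ replaces the value at $\mathsf{end}$. $\gamma_g,\delta_d$ denote immediate subgames with root labels $g,d$. Existential projection $\mathcal{P}(\alpha_a,S)$: $(x:=* )_a\mapsto(x:=* )_a;?S(\mathsf{end})$; $\{x'=f(x)\&Q\}_a\mapsto\{x'=f(x)\&Q\}_a;?S(\mathsf{end})$; $(\gamma_g\cup\delta_d)_a\mapsto(?S(g);\mathcal{P}(\gamma_g,S))\cup(?S(d);\mathcal{P}(\delta_d,S))$; $((\gamma_g)^* )_a\mapsto(?S(g);\mathcal{P}(\gamma_g,S\{\mathsf{end}\mapsto S(a)\}))^*;?S(\mathsf{end})$; $(\gamma_g;\delta_d)_a\mapsto\mathcal{P}(\gamma_g,S\{\mathsf{end}\mapsto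 S(d)\});\mathcal{P}(\delta_d,S)$; $(\gamma_g\cap\delta_d)_a\mapsto\mathcal{P}(\gamma_g,S)\cap\mathcal{P}(\delta_d,S)$; $((\gamma_g)^\times)_a\mapsto\mathcal{P}(\gamma_g,S\{\mathsf{end}\mapsto S(a)\})^\times$; $x:=e,x:=\otimes,?Q,!Q,\{x'=f(x)\&Q\}^d$ unchanged (labels preserved, new nodes fresh labels). Inductive Angelic subvalue map ($S\Vdash\alpha_a$), recursively: atomic $\alpha$ ($x:=e,x:=*,x:=\otimes,?Q,!Q$, Angel or Demon ODE): $\models S(a)\rightarrow\langle\alpha\rangle S(\mathsf{end})$; $(\gamma_g\cup\delta_d)_a$: $\models S(a)\rightarrow S(g)\vee S(d)$, $S\Vdash\gamma_g$, $S\Vdash\delta_d$; $(\gamma_g\cap\delta_d)_a$: $\models S(a)\rightarrow S(g)\wedge S(d)$ and both; $(\gamma_g;\delta_d)_a$: $\models S(a)\rightarrow S(g)$, $S\{\mathsf{end}\mapsto S(d)\}\Vdash\gamma_g$, $S\Vdash\delta_d$; $((\gamma_g)^* )_a$: $\models S(a)\rightarrow\langle\mathcal{P}(\alpha_a,S)\rangle S(\mathsf{end})$ and $S\{\mathsf{end}\mapsto S(a)\}\Vdash\gamma_g$; $((\gamma_g)^\times)_a$: $\models S(a)\rightarrow S(g)\wedge S(\mathsf{end})$ and $S\{\mathsf{end}\mapsto S(a)\}\Vdash\gamma_g$. *)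

theory Defs
  imports Complex_Main
begin

type_synonym var = nat
type_synonym state = "var \<Rightarrow> real"

text \<open>Game nodes of the input game carry labels \<open>L n\<close>; \<open>End\<close> is the special
  extra label \<open>end\<close>; nodes newly created by the projection carry the label \<open>Fresh\<close>
  (their labels are never consulted).\<close>
datatype label = L nat | End | Fresh

datatype trm = Var var | Const real | Neg trm | Plus trm trm | Times trm trm

type_synonym ode = "(var \<times> trm) list"

datatype fml =
    FTrue | FFalse
  | Eq trm trm | Geq trm trm | Gt trm trm
  | Not fml | And fml fml | Or fml fml | Imp fml fml
  | Exists var fml | Forall var fml
  | Dia game fml | Box game fml
and game =
    Assign label var trm
  | Rand label var
  | DRand label var
  | Test label fml
  | DTest label fml
  | ODE label ode fml
  | DODE label ode fml
  | Choice label game game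
  | DChoice label game game
  | Seq label game game
  | Star label game
  | DStar label game

primrec lab :: "game \<Rightarrow> label" where
  "lab (Assign l x e) = l"
| "lab (Rand l x) = l"
| "lab (DRand l x) = l"
| "lab (Test l Q) = l"
| "lab (DTest l Q) = l"
| "lab (ODE l f Q) = l"
| "lab (DODE l f Q) = l"
| "lab (Choice l a b) = l"
| "lab (DChoice l a b) = l"
| "lab (Seq l a b) = l"
| "lab (Star l a) = l"
| "lab (DStar l a) = l"

primrec nodes :: "game \<Rightarrow> label list" where
  "nodes (Assign l x e) = [l]"
| "nodes (Rand l x) = [l]"
| "nodes (DRand l x) = [l]"
| "nodes (Test l Q) = [l]"
| "nodes (DTest l Q) = [l]"
| "nodes (ODE l f Q) = [l]"
| "nodes (DODE l f Q) = [l]"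
| "nodes (Choice l a b) = l # nodes a @ nodes b"
| "nodes (DChoice l a b) = l # nodes a @ nodes b"
| "nodes (Seq l a b) = l # nodes a @ nodes b"
| "nodes (Star l a) = l # nodes a"
| "nodes (DStar l a) = l # nodes a"

definition well_labelled :: "game \<Rightarrow> bool" where
  "well_labelled \<alpha> \<longleftrightarrow> distinct (nodes \<alpha>) \<and> (\<forall>l\<in>set (nodes \<alpha>). \<exists>n. l = L n)"

primrec tsem :: "trm \<Rightarrow> state \<Rightarrow> real" where
  "tsem (Var x) \<omega> = \<omega> x"
| "tsem (Const c) \<omega> = c"
| "tsem (Neg e) \<omega> = - tsem e \<omega>"
| "tsem (Plus e1 e2) \<omega> = tsem e1 \<omega> + tsem e2 \<omega>"
| "tsem (Times e1 e2) \<omega> = tsem e1 \<omega> * tsem e2 \<omega>"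

definition ode_sol :: "ode \<Rightarrow> state set \<Rightarrow> state \<Rightarrow> real \<Rightarrow> (real \<Rightarrow> state) \<Rightarrow> bool" where
  "ode_sol f Q \<omega> r sol \<longleftrightarrow> 0 \<le> r \<and> sol 0 = \<omega> \<and>
     (\<forall>t\<in>{0..r}.
        sol t \<in> Q
      \<and> (\<forall>y. y \<notin> fst ` set f \<longrightarrow> sol t y = \<omega> y)
      \<and> (\<forall>(x, e)\<in>set f. ((\<lambda>s. sol s x) has_real_derivative tsem e (sol t)) (at t within {0..r})))"

primrec fml_sem :: "fml \<Rightarrow> state set"
  and game_sem :: "game \<Rightarrow> state set \<Rightarrow> state set" where
  "fml_sem FTrue = UNIV"
| "fml_sem FFalse = {}"
| "fml_sem (Eq e1 e2) = {\<omega>. tsem e1 \<omega> = tsem e2 \<omega>}"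
| "fml_sem (Geq e1 e2) = {\<omega>. tsem e1 \<omega> \<ge> tsem e2 \<omega>}"
| "fml_sem (Gt e1 e2) = {\<omega>. tsem e1 \<omega> > tsem e2 \<omega>}"
| "fml_sem (Not p) = - fml_sem p"
| "fml_sem (And p q) = fml_sem p \<inter> fml_sem q"
| "fml_sem (Or p q) = fml_sem p \<union> fml_sem q"
| "fml_sem (Imp p q) = - fml_sem p \<union> fml_sem q"
| "fml_sem (Exists x p) = {\<omega>. \<exists>v. \<omega>(x := v) \<in> fml_sem p}"
| "fml_sem (Forall x p) = {\<omega>. \<forall>v. \<omega>(x := v) \<in> fml_sem p}"
| "fml_sem (Dia a p) = game_sem a (fml_sem p)"
| "fml_sem (Box a p) = - game_sem a (- fml_sem p)"
| "game_sem (Assign l x e) X = {\<omega>. \<omega>(x := tsem e \<omega>) \<in> X}"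
| "game_sem (Rand l x) X = {\<omega>. \<exists>v. \<omega>(x := v) \<in> X}"
| "game_sem (DRand l x) X = {\<omega>. \<forall>v. \<omega>(x := v) \<in> X}"
| "game_sem (Test l Q) X = fml_sem Q \<inter> X"
| "game_sem (DTest l Q) X = - fml_sem Q \<union> X"
| "game_sem (ODE l f Q) X =
     {\<omega>. \<exists>r sol. ode_sol f (fml_sem Q) \<omega> r sol \<and> sol r \<in> X}"
| "game_sem (DODE l f Q) X =
     {\<omega>. \<forall>r sol. ode_sol f (fml_sem Q) \<omega> r sol \<longrightarrow> sol r \<in> X}"
| "game_sem (Choice l a b) X = game_sem a X \<union> game_sem b X"
| "game_sem (DChoice l a b) X = game_sem a X \<inter> game_sem b X"
| "game_sem (Seq l a b) X = game_sem a (game_sem b X)"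
| "game_sem (Star l a) X = lfp (\<lambda>Z. X \<union> game_sem a Z)"
| "game_sem (DStar l a) X = gfp (\<lambda>Z. X \<inter> game_sem a Z)"

definition valid :: "fml \<Rightarrow> bool" where
  "valid p \<longleftrightarrow> (\<forall>\<omega>. \<omega> \<in> fml_sem p)"

type_synonym smap = "label \<Rightarrow> fml"

primrec proj :: "game \<Rightarrow> smap \<Rightarrow> game" where
  "proj (Assign l x e) S = Assign l x e"
| "proj (Rand l x) S = Seq Fresh (Rand l x) (Test Fresh (S End))"
| "proj (DRand l x) S = DRand l x"
| "proj (Test l Q) S = Test l Q"
| "proj (DTest l Q) S = DTest l Q"
| "proj (ODE l f Q) S = Seq Fresh (ODE l f Q) (Test Fresh (S End))"
| "proj (DODE l f Q) S = DODE l f Q"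
| "proj (Choice l g d) S =
     Choice l (Seq Fresh (Test Fresh (S (lab g))) (proj g S))
              (Seq Fresh (Test Fresh (S (lab d))) (proj d S))"
| "proj (DChoice l g d) S = DChoice l (proj g S) (proj d S)"
| "proj (Seq l g d) S = Seq l (proj g (S(End := S (lab d)))) (proj d S)"
| "proj (Star l g) S =
     Seq Fresh (Star l (Seq Fresh (Test Fresh (S (lab g))) (proj g (S(End := S l)))))
               (Test Fresh (S End))"
| "proj (DStar l g) S = DStar l (proj g (S(End := S l)))"

primrec subval :: "smap \<Rightarrow> game \<Rightarrow> bool" where
  "subval S (Assign l x e) = valid (Imp (S l) (Dia (Assign l x e) (S End)))"
| "subval S (Rand l x) = valid (Imp (S l) (Dia (Rand l x) (S End)))"
| "subval S (DRand l x) = valid (Imp (S l) (Dia (DRand l x) (S End)))"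
| "subval S (Test l Q) = valid (Imp (S l) (Dia (Test l Q) (S End)))"
| "subval S (DTest l Q) = valid (Imp (S l) (Dia (DTest l Q) (S End)))"
| "subval S (ODE l f Q) = valid (Imp (S l) (Dia (ODE l f Q) (S End)))"
| "subval S (DODE l f Q) = valid (Imp (S l) (Dia (DODE l f Q) (S End)))"
| "subval S (Choice l g d) =
     (valid (Imp (S l) (Or (S (lab g)) (S (lab d)))) \<and> subval S g \<and> subval S d)"
| "subval S (DChoice l g d) =
     (valid (Imp (S l) (And (S (lab g)) (S (lab d)))) \<and> subval S g \<and> subval S d)"
| "subval S (Seq l g d) =
     (valid (Imp (S l) (S (lab g))) \<and> subval (S(End := S (lab d))) g \<and> subval S d)"
| "subval S (Star l g) =
     (valid (Imp (S l) (Dia (proj (Star l g) S) (S End))) \<and> subval (S(End := S l)) g)"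
| "subval S (DStar l g) =
     (valid (Imp (S l) (And (S (lab g)) (S End))) \<and> subval (S(End := S l)) g)"

end

theory Submission
  imports Defs
begin

lemma game_mono_aux: "fml_sem p = fml_sem p" "X \<subseteq> Y \<Longrightarrow> game_sem a X \<subseteq> game_sem a Y"
proof (induct p and a arbitrary: and X Y rule: fml.induct game.induct)
  case (Star l a)
  then show ?case by (simp, intro lfp_mono, blast)
next
  case (DStar l a)
  then show ?case by (simp, intro gfp_mono, blast)
qed (auto, blast+)

lemmas game_mono = game_mono_aux(2)

lemma atomic1: "valid (Imp (S End) \<phi>) \<Longrightarrow> valid (Imp (S l) (Dia a (S End))) \<Longrightarrow>
  \<omega> \<in> fml_sem (S l) \<Longrightarrow> \<omega> \<in> game_sem a (fml_sem \<phi>)"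
  using game_mono[of "fml_sem (S End)" "fml_sem \<phi>" a] unfolding valid_def by auto

lemma atomic2: "valid (Imp (S End) \<phi>) \<Longrightarrow> valid (Imp (S l) (Dia a (S End))) \<Longrightarrow>
  \<omega> \<in> fml_sem (S l) \<Longrightarrow> \<omega> \<in> game_sem a (fml_sem (S End) \<inter> fml_sem \<phi>)"
  using game_mono[of "fml_sem (S End)" "fml_sem (S End) \<inter> fml_sem \<phi>" a] unfolding valid_def by auto

lemma lab_in: "lab a \<in> set (nodes a)"
  by (cases a) auto

lemma wl_lab: "well_labelled a \<Longrightarrow> lab a \<noteq> End"
  using lab_in[of a] unfolding well_labelled_def by auto

lemma wl_sub:
  "well_labelled (Choice l g d) \<Longrightarrow> well_labelled g \<and> well_labelled d"
  "well_labelled (DChoice l g d) \<Longrightarrow> well_labelled g \<and> well_labelled d"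
  "well_labelled (Seq l g d) \<Longrightarrow> well_labelled g \<and> well_labelled d"
  "well_labelled (Star l g) \<Longrightarrow> well_labelled g"
  "well_labelled (DStar l g) \<Longrightarrow> well_labelled g"
  unfolding well_labelled_def by auto

lemma main_aux:
  shows "fml_sem p = fml_sem p"
  and "well_labelled \<alpha> \<Longrightarrow> subval S \<alpha> \<Longrightarrow> valid (Imp (S End) \<phi>) \<Longrightarrow>
    \<omega> \<in> fml_sem (S (lab \<alpha>)) \<Longrightarrow> \<omega> \<in> game_sem (proj \<alpha> S) (fml_sem \<phi>)"
proof (induct p and \<alpha> arbitrary: and S \<phi> \<omega> rule: fml.induct game.induct)
  case (Assign l x e) then show ?case using atomic1[of S \<phi> l "Assign l x e" \<omega>] by simp
next
  case (Rand l x) then show ?case using atomic2[of S \<phi> l "Rand l x" \<omega>] by simp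
next
  case (DRand l x) then show ?case using atomic1[of S \<phi> l "DRand l x" \<omega>] by simp
next
  case (Test l x) then show ?case using atomic1[of S \<phi> l "Test l x" \<omega>] by simp
next
  case (DTest l x) then show ?case using atomic1[of S \<phi> l "DTest l x" \<omega>] by simp
next
  case (ODE l f x) then show ?case using atomic2[of S \<phi> l "ODE l f x" \<omega>] by simp
next
  case (DODE l f x) then show ?case using atomic1[of S \<phi> l "DODE l f x" \<omega>] by simp
next
  case (Choice l g d)
  then show ?case using wl_sub(1)[OF Choice(3)] by (auto simp: valid_def)
next
  case (DChoice l g d)
  then show ?case using wl_sub(2)[OF DChoice(3)] by (auto simp: valid_def)
next
  case (Seq l g d)
  have wg: "well_labelled g" and wd: "well_labelled d" using wl_sub(3)[OF Seq(3)] by auto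
  have ng: "lab g \<noteq> End" using wl_lab[OF wg] .
  let ?S = "S(End := S (lab d))"
  have sg: "subval ?S g" and sd: "subval S d" and sl: "valid (Imp (S l) (S (lab g)))"
    using Seq(4) by auto
  have v: "valid (Imp (?S End) (Dia (proj d S) \<phi>))"
    using Seq(2)[OF wd sd Seq(5)] by (auto simp: valid_def)
  have "\<omega> \<in> fml_sem (?S (lab g))" using sl Seq(6) ng by (auto simp: valid_def)
  from Seq(1)[OF wg sg v this] show ?case by (simp only: proj.simps game_sem.simps fml_sem.simps)
next
  case (Star l g)
  have "\<omega> \<in> game_sem (proj (Star l g) S) (fml_sem (S End))"
    using Star by (auto simp: valid_def simp del: proj.simps)
  moreover have "fml_sem (S End) \<subseteq> fml_sem \<phi>" using Star(4) by (auto simp: valid_def)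
  ultimately show ?case using game_mono by blast
next
  case (DStar l g)
  have wg: "well_labelled g" using wl_sub(5)[OF DStar(2)] .
  have ng: "lab g \<noteq> End" using wl_lab[OF wg] .
  let ?S = "S(End := S l)"
  have sg: "subval ?S g" and sl: "valid (Imp (S l) (And (S (lab g)) (S End)))"
    using DStar(3) by auto
  have "fml_sem (S l) \<subseteq> fml_sem \<phi> \<inter> game_sem (proj g ?S) (fml_sem (S l))"
  proof
    fix w assume w: "w \<in> fml_sem (S l)"
    have "w \<in> fml_sem \<phi>" using w sl DStar(4) by (auto simp: valid_def)
    moreover have "w \<in> fml_sem (?S (lab g))" using w sl ng by (auto simp: valid_def)
    hence "w \<in> game_sem (proj g ?S) (fml_sem (S l))"
    proof -
      have "valid (Imp (?S End) (S l))" by (simp add: valid_def)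
      from DStar(1)[OF wg sg this \<open>w \<in> fml_sem (?S (lab g))\<close>] show ?thesis .
    qed
    ultimately show "w \<in> fml_sem \<phi> \<inter> game_sem (proj g ?S) (fml_sem (S l))" by blast
  qed
  hence "fml_sem (S l) \<subseteq> gfp (\<lambda>Z. fml_sem \<phi> \<inter> game_sem (proj g ?S) Z)"
    by (rule gfp_upperbound)
  then show ?case using DStar(5) by auto
qed (rule refl)+

lemmas main = main_aux(2)

theorem mainTheorem9:
  fixes \<alpha> :: game and S :: smap and \<phi> :: fml and \<omega> :: state
  assumes "well_labelled \<alpha>"
    and "subval S \<alpha>"
    and "valid (Imp (S End) \<phi>)"
    and "\<omega> \<in> fml_sem (S (lab \<alpha>))"
  shows "\<omega> \<in> fml_sem (Dia (proj \<alpha> S) \<phi>)"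
  using main[OF assms(1) assms(2) assms(3) assms(4)] by simp

end
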